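(* Let $R=\mathcal{C}'/[(1+\delta_a)^2(1+r/\log M)]$ with $r>r_1$, where $$r_0=\frac{1}{2(1+\delta_a)^2},\qquad r_1=\frac{r_0}{2}+\frac{\sqrt{\log M}}{\sqrt{\pi}\,(1+\delta_a)}.$$ Let $x_r$ be defined by $1-x_r=\frac{1}{snr}\cdot\frac{r}{\log M}$ (equivalently, $x_r$ is the value of $x$ with $z_x=0$). Then for all $0\le x\le x_r$ (with $x\in[0,1]$), $$g_{low}(x)-x\ \ge\ gap:=\frac{1}{snr}\cdot\frac{r-r_1}{\log M}.$$
   Context: Fix an integer $M\ge2$, $snr>0$, $\nu=snr/(1+snr)$, constants $a\ge0$, $\mathcal{C}'>0$, and $\delta_a=a/\sqrt{2\log M}$ (natural logarithm). $\Phi,\phi$ denote the standard normal distribution function and density. For $x\in[0,1]$, $u>0$: $\mu(x,u)=\big(\sqrt{u/(1-x\nu)}-1\big)\sqrt{2\log M}-a$, $u_x=1-x\nu$, $z_x=\mu(x,(1-\nu)\mathcal{C}'/R)$, and $$g_{low}(x)=\Phi(z_x)+\frac1\nu\int_{z_x}^\infty\Big[1-\frac{R}{\mathcal{C}'}u_x\Big(1+\frac{z+a}{\sqrt{2\log M}}\Big)^2\Big]\phi(z)\,dz .$$ (This $g_{low}$ is a lower bound for $g(x)=\frac1\nu\int_{1-\nu}^1\Phi(\mu(x,u\,\mathcal{C}'/R))\,du$.) *)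

theory Defs
  imports "HOL-Probability.Probability"
begin

definition Phi :: "real \<Rightarrow> real" where
  "Phi z = (LBINT t:{..z}. std_normal_density t)"

definition nu :: "real \<Rightarrow> real" where
  "nu snr = snr / (1 + snr)"

definition delta_a :: "nat \<Rightarrow> real \<Rightarrow> real" where
  "delta_a M a = a / sqrt (2 * ln (real M))"

definition mu :: "nat \<Rightarrow> real \<Rightarrow> real \<Rightarrow> real \<Rightarrow> real \<Rightarrow> real" where
  "mu M snr a x u = (sqrt (u / (1 - x * nu snr)) - 1) * sqrt (2 * ln (real M)) - a"

definition u_x :: "real \<Rightarrow> real \<Rightarrow> real" where
  "u_x snr x = 1 - x * nu snr"

definition z_x :: "nat \<Rightarrow> real \<Rightarrow> real \<Rightarrow> real \<Rightarrow> real \<Rightarrow> real \<Rightarrow> real" where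
  "z_x M snr a C' R x = mu M snr a x ((1 - nu snr) * C' / R)"

definition g_low :: "nat \<Rightarrow> real \<Rightarrow> real \<Rightarrow> real \<Rightarrow> real \<Rightarrow> real \<Rightarrow> real" where
  "g_low M snr a C' R x =
     Phi (z_x M snr a C' R x)
     + (1 / nu snr) *
       (LBINT z:{z_x M snr a C' R x..}.
          (1 - (R / C') * u_x snr x * (1 + (z + a) / sqrt (2 * ln (real M)))\<^sup>2)
          * std_normal_density z)"

definition r0 :: "nat \<Rightarrow> real \<Rightarrow> real" where
  "r0 M a = 1 / (2 * (1 + delta_a M a)\<^sup>2)"

definition r1 :: "nat \<Rightarrow> real \<Rightarrow> real" where
  "r1 M a = r0 M a / 2 + sqrt (ln (real M)) / (sqrt pi * (1 + delta_a M a))"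

definition rate_R :: "nat \<Rightarrow> real \<Rightarrow> real \<Rightarrow> real \<Rightarrow> real" where
  "rate_R M a C' r = C' / ((1 + delta_a M a)\<^sup>2 * (1 + r / ln (real M)))"

definition x_r :: "nat \<Rightarrow> real \<Rightarrow> real \<Rightarrow> real" where
  "x_r M snr r = 1 - (1 / snr) * (r / ln (real M))"

end

theory Submission
  imports Defs
begin

lemma intg_sq:
  fixes c :: real
  shows "integrable lborel (\<lambda>t. (1 + t / c)\<^sup>2 * std_normal_density t)"
proof -
  have eq: "(\<lambda>t. (1 + t / c)\<^sup>2 * std_normal_density t) =
     (\<lambda>t. std_normal_density t * t^0 + (2/c) * (std_normal_density t * t^1) + (1/c^2) * (std_normal_density t * t^2))"
    by (cases "c = 0") (auto simp: fun_eq_iff power2_eq_square field_simps)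
  show ?thesis unfolding eq
    by (intro Bochner_Integration.integrable_add Bochner_Integration.integrable_mult_right integrable_std_normal_moment)
qed

lemma tail_lin:
  fixes z k c :: real
  shows "(LBINT t:{z..}. (1 - k * (1 + t / c)\<^sup>2) * std_normal_density t)
    = (LBINT t:{z..}. std_normal_density t) - k * (LBINT t:{z..}. (1 + t / c)\<^sup>2 * std_normal_density t)"
proof -
  have i1: "integrable lborel (\<lambda>t. indicator {z..} t *\<^sub>R std_normal_density t)"
    by (intro integrable_mult_indicator) auto
  have i2: "integrable lborel (\<lambda>t. indicator {z..} t *\<^sub>R ((1 + t / c)\<^sup>2 * std_normal_density t))"
    by (intro integrable_mult_indicator intg_sq) auto
  have "(LBINT t:{z..}. (1 - k * (1 + t / c)\<^sup>2) * std_normal_density t)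
     = (\<integral>t. indicator {z..} t *\<^sub>R std_normal_density t - k * (indicator {z..} t *\<^sub>R ((1 + t / c)\<^sup>2 * std_normal_density t)) \<partial>lborel)"
    unfolding set_lebesgue_integral_def
    by (intro Bochner_Integration.integral_cong) (auto simp: algebra_simps)
  also have "\<dots> = (\<integral>t. indicator {z..} t *\<^sub>R std_normal_density t \<partial>lborel) - k * (\<integral>t. indicator {z..} t *\<^sub>R ((1 + t / c)\<^sup>2 * std_normal_density t) \<partial>lborel)"
    using i1 i2 by (subst Bochner_Integration.integral_diff) auto
  finally show ?thesis unfolding set_lebesgue_integral_def .
qed

lemma sum_ge1:
  fixes z :: real
  shows "Phi z + (LBINT t:{z..}. std_normal_density t) \<ge> 1"
proof -
  have i1: "integrable lborel (\<lambda>t. indicator {z..} t *\<^sub>R std_normal_density t)"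
    by (intro integrable_mult_indicator) auto
  have i2: "integrable lborel (\<lambda>t. indicator {..z} t *\<^sub>R std_normal_density t)"
    by (intro integrable_mult_indicator) auto
  have "1 = (\<integral>t. std_normal_density t \<partial>lborel)" by simp
  also have "\<dots> \<le> (\<integral>t. indicator {..z} t *\<^sub>R std_normal_density t + indicator {z..} t *\<^sub>R std_normal_density t \<partial>lborel)"
    using i1 i2 by (intro integral_mono) (auto split: split_indicator)
  also have "\<dots> = Phi z + (LBINT t:{z..}. std_normal_density t)"
    using i1 i2 by (simp add: Phi_def set_lebesgue_integral_def)
  finally show ?thesis .
qed

lemma odd_mom: "has_bochner_integral lborel (\<lambda>t. std_normal_density t * (t * \<bar>t\<bar>)) 0"
proof -
  have "integrable lborel (\<lambda>t. indicator {0..} t *\<^sub>R (std_normal_density t * (t * \<bar>t\<bar>)))"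
  proof (rule integrable_mult_indicator)
    have "integrable lborel (\<lambda>t. std_normal_density t * t^2)" by (rule integrable_std_normal_moment)
    then show "integrable lborel (\<lambda>t. std_normal_density t * (t * \<bar>t\<bar>))"
      by (rule Bochner_Integration.integrable_bound) (auto simp: abs_mult power2_eq_square)
  qed auto
  then show ?thesis
    by (intro has_bochner_integral_odd_function[OF has_bochner_integral_integrable]) 
       (auto simp: std_normal_density_def)
qed

lemma F_bound:
  fixes z c m :: real
  assumes c: "c > 0" and m: "0 < m" "m \<le> 1" and z: "z = c * (m - 1)"
  shows "m\<^sup>2 * Phi z + (LBINT t:{z..}. (1 + t / c)\<^sup>2 * std_normal_density t)
      \<le> 1 + sqrt (2 / pi) / c + 1 / (2 * c\<^sup>2)"
proof -
  define h1 where "h1 t = std_normal_density t * t^(2*0) + (1/c) * (std_normal_density t * \<bar>t\<bar>^(2*0+1))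
     + (1/c) * (std_normal_density t * t^(2*0+1)) + (1/(2*c\<^sup>2)) * (std_normal_density t * t^(2*1))
     + (1/(2*c\<^sup>2)) * (std_normal_density t * (t * \<bar>t\<bar>))" for t
  have hb: "has_bochner_integral lborel h1 (fact (2 * 0) / (2^0 * fact 0) + (1/c) * (sqrt (2/pi) * 2^0 * fact 0) + (1/c) * 0
       + (1/(2*c\<^sup>2)) * (fact (2*1) / (2^1 * fact 1)) + (1/(2*c\<^sup>2)) * 0)"
    unfolding h1_def
    by (intro has_bochner_integral_add has_bochner_integral_mult_right odd_mom
        std_normal_moment_abs_odd std_normal_moment_odd std_normal_moment_even)
  have hval: "integral\<^sup>L lborel h1 = 1 + sqrt (2 / pi) / c + 1 / (2 * c\<^sup>2)"
    using has_bochner_integral_integral_eq[OF hb] by simp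
  have i1: "integrable lborel (\<lambda>t. indicator {..z} t *\<^sub>R std_normal_density t)"
    by (intro integrable_mult_indicator) auto
  have i2: "integrable lborel (\<lambda>t. indicator {z..} t *\<^sub>R ((1 + t / c)\<^sup>2 * std_normal_density t))"
    by (intro integrable_mult_indicator intg_sq) auto
  have "m\<^sup>2 * Phi z + (LBINT t:{z..}. (1 + t / c)\<^sup>2 * std_normal_density t)
     = (\<integral>t. m\<^sup>2 * (indicator {..z} t *\<^sub>R std_normal_density t) + indicator {z..} t *\<^sub>R ((1 + t / c)\<^sup>2 * std_normal_density t) \<partial>lborel)"
    using i1 i2 by (simp add: Phi_def set_lebesgue_integral_def)
  also have "\<dots> \<le> integral\<^sup>L lborel h1"
  proof (rule integral_mono_AE)
    show "integrable lborel h1" using hb by (simp add: has_bochner_integral_iff)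
    show "integrable lborel (\<lambda>t. m\<^sup>2 * (indicator {..z} t *\<^sub>R std_normal_density t) + indicator {z..} t *\<^sub>R ((1 + t / c)\<^sup>2 * std_normal_density t))"
      using i1 i2 by auto
    show "AE t in lborel. m\<^sup>2 * (indicator {..z} t *\<^sub>R std_normal_density t) + indicator {z..} t *\<^sub>R ((1 + t / c)\<^sup>2 * std_normal_density t) \<le> h1 t"
      using AE_lborel_singleton[of z]
    proof eventually_elim
      case (elim t)
      have p: "std_normal_density t \<ge> 0" by simp
      have h1e: "h1 t = std_normal_density t * (1 + (\<bar>t\<bar> + t) / c + (t^2 + t * \<bar>t\<bar>) / (2 * c^2))"
        unfolding h1_def using c by (simp add: field_simps power2_eq_square)
      have g1: "1 \<le> 1 + (\<bar>t\<bar> + t) / c + (t^2 + t * \<bar>t\<bar>) / (2 * c^2)"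
        using c by (cases "t \<ge> 0") (auto simp: power2_eq_square)
      show ?case
      proof (cases "t < z")
        case True
        have m21: "m^2 \<le> 1" using m by (simp add: power_le_one)
        then have "m\<^sup>2 * std_normal_density t \<le> std_normal_density t * (1 + (\<bar>t\<bar> + t) / c + (t^2 + t * \<bar>t\<bar>) / (2 * c^2))"
          using mult_right_mono[OF m21 p] mult_left_mono[OF g1 p] by simp
        then show ?thesis using True h1e by (simp add: indicator_def)
      next
        case False
        then have tz: "t > z" using elim by auto
        show ?thesis
        proof (cases "t \<le> 0")
          case True
          have cm: "c * m > 0" using c m(1) by simp
          have zz: "z = c * m - c" using z by (simp add: algebra_simps)
          have "0 < c + t" using tz zz cm by linarith
          then have "0 \<le> 1 + t / c" using c by (simp add: field_simps)
          moreover have "1 + t / c \<le> 1" using True c by (simp add: divide_nonpos_pos)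
          ultimately have t21: "(1 + t/c)^2 \<le> 1" by (simp add: power_le_one)
          then have "(1 + t/c)^2 * std_normal_density t \<le> std_normal_density t * (1 + (\<bar>t\<bar> + t) / c + (t^2 + t * \<bar>t\<bar>) / (2 * c^2))"
            using mult_right_mono[OF t21 p] mult_left_mono[OF g1 p] by simp
          then show ?thesis using tz h1e by (simp add: indicator_def)
        next
          case False
          have "(1 + t/c)^2 = 1 + (\<bar>t\<bar> + t) / c + (t^2 + t * \<bar>t\<bar>) / (2 * c^2)"
            using False c by (simp add: field_simps power2_eq_square)
          then show ?thesis using tz h1e by (simp add: indicator_def mult.commute)
        qed
      qed
    qed
  qed
  finally show ?thesis using hval by simp
qed

theorem lemma7:
  fixes M :: nat and snr a C' r x :: real
  assumes "M \<ge> 2" and "snr > 0" and "a \<ge> 0" and "C' > 0"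
    and "r > r1 M a"
    and "0 \<le> x" and "x \<le> 1" and "x \<le> x_r M snr r"
  shows "g_low M snr a C' (rate_R M a C' r) x - x \<ge> (1 / snr) * ((r - r1 M a) / ln (real M))"
proof -
  define L where "L = ln (real M)"
  define s where "s = sqrt (2 * L)"
  define \<delta> where "\<delta> = delta_a M a"
  define c where "c = s + a"
  define \<nu> where "\<nu> = nu snr"
  define R where "R = rate_R M a C' r"
  define u where "u = 1 - x * \<nu>"
  have L: "L > 0" unfolding L_def using assms(1) by simp
  have s: "s > 0" unfolding s_def using L by simp
  have s2: "s^2 = 2 * L" unfolding s_def using L by simp
  have \<delta>: "\<delta> = a / s" unfolding \<delta>_def delta_a_def s_def L_def by simp
  have \<delta>0: "\<delta> \<ge> 0" using \<delta> s assms(3) by simp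
  have c: "c > 0" unfolding c_def using s assms(3) by simp
  have c\<delta>: "1 + \<delta> = c / s" using \<delta> s unfolding c_def by (simp add: field_simps)
  have c_eq: "c = s * (1 + \<delta>)" using c\<delta> s by (simp add: field_simps)
  have \<nu>: "0 < \<nu>" "\<nu> < 1" unfolding \<nu>_def nu_def using assms(2) by auto
  have sp: "1 + snr > 0" using assms(2) by simp
  have \<nu>s: "\<nu> / snr = 1 - \<nu>"
  proof -
    have "\<nu> / snr = 1 / (1 + snr)" unfolding \<nu>_def nu_def using assms(2) by simp
    also have "\<dots> = 1 - \<nu>" unfolding \<nu>_def nu_def using sp by (simp add: field_simps)
    finally show ?thesis .
  qed
  have r0: "r0 M a > 0" unfolding r0_def using \<delta>0 \<delta>_def by simp
  have r1e: "r1 M a = r0 M a / 2 + sqrt L / (sqrt pi * (1 + \<delta>))" unfolding r1_def L_def \<delta>_def by simp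
  have "sqrt L / (sqrt pi * (1 + \<delta>)) > 0" using L \<delta>0 by simp
  then have r1p: "r1 M a > 0" using r1e r0 by simp
  have r: "r > 0" using r1p assms(5) by simp
  define w where "w = 1 + r / L"
  have w: "w > 0" unfolding w_def using divide_pos_pos[OF r L] by simp
  have "x * \<nu> \<le> 1 * \<nu>" using mult_right_mono[OF assms(7), of \<nu>] \<nu> by simp
  then have u: "u > 0" unfolding u_def using \<nu> by linarith
  have xr: "x \<le> 1 - (1 / snr) * (r / L)" using assms(8) unfolding x_r_def L_def by simp
  have "x * \<nu> \<le> (1 - (1 / snr) * (r / L)) * \<nu>"
    using mult_right_mono[OF xr, of \<nu>] \<nu> by simp
  also have "\<dots> = \<nu> - (\<nu> / snr) * (r / L)" using assms(2) by (simp add: field_simps)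
  also have "\<dots> = \<nu> - (1 - \<nu>) * (r / L)" using \<nu>s by simp
  finally have "x * \<nu> \<le> \<nu> - (1 - \<nu>) * (r / L)" .
  then have uge: "u \<ge> (1 - \<nu>) * w" unfolding u_def w_def by (simp add: algebra_simps)
  define k where "k = u / w"
  have kw: "k * w = u" unfolding k_def using w by simp
  have k: "k \<ge> 1 - \<nu>" "k > 0" unfolding k_def using uge w u by (auto simp: field_simps)
  define q where "q = sqrt ((1 - \<nu>) * w / u)"
  have nn: "(1 - \<nu>) * w / u \<ge> 0" using \<nu> w u by simp
  have q2': "q^2 = (1 - \<nu>) * w / u" unfolding q_def using nn by simp
  have q2: "k * q^2 = 1 - \<nu>" unfolding q2' k_def using w u by (simp add: field_simps)
  have qpos: "q > 0" unfolding q_def using \<nu> w u by simp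
  have q1: "q \<le> 1" unfolding q_def using uge u by simp
  have R: "R = C' / ((1 + \<delta>)^2 * w)" unfolding R_def rate_R_def \<delta>_def w_def L_def by simp
  define z where "z = z_x M snr a C' R x"
  have eqf: "(1 - \<nu>) * C' / R / u = (1 + \<delta>)^2 * ((1 - \<nu>) * w / u)"
  proof -
    have pd: "(1 + \<delta>)^2 > 0" using \<delta>0 by simp
    show ?thesis unfolding R using pd assms(4) w u by (simp add: field_simps)
  qed
  have sqX: "sqrt ((1 + \<delta>)^2 * ((1 - \<nu>) * w / u)) = (1 + \<delta>) * q"
    unfolding q_def real_sqrt_mult using \<delta>0 by simp
  have sq: "sqrt ((1 - \<nu>) * C' / R / u) = (1 + \<delta>) * q"
    unfolding eqf by (rule sqX)
  have z1: "z = (sqrt ((1 - \<nu>) * C' / R / u) - 1) * s - a"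
    unfolding z_def z_x_def mu_def u_def \<nu>_def s_def L_def by simp
  have z: "z = c * (q - 1)"
  proof -
    have "z = ((1 + \<delta>) * q - 1) * s - a" using z1 sq by simp
    also have "\<dots> = (s * (1 + \<delta>)) * q - (s + a)" by (simp add: algebra_simps)
    also have "\<dots> = c * (q - 1)" using c_eq c_def by (simp add: algebra_simps)
    finally show ?thesis .
  qed
  have RC: "R / C' = 1 / ((c / s)^2 * w)" using R c\<delta> assms(4) by simp
  have integ: "\<And>t. (R / C') * u_x snr x * (1 + (t + a) / s)\<^sup>2 = k * (1 + t / c)\<^sup>2"
  proof -
    fix t
    have e1: "(c / s) * (1 + t / c) = (c + t) / s" using c s by (simp add: field_simps)
    have e2: "(c + t) / s = 1 + (t + a) / s" using s unfolding c_def by (simp add: field_simps)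
    have e: "1 + (t + a) / s = (c / s) * (1 + t / c)" using e1 e2 by simp
    have ux: "u_x snr x = u" unfolding u_x_def u_def \<nu>_def by simp
    show "(R / C') * u_x snr x * (1 + (t + a) / s)\<^sup>2 = k * (1 + t / c)\<^sup>2"
      unfolding RC ux e k_def using s c w by (simp add: field_simps power2_eq_square)
  qed
  define A where "A = (LBINT t:{z..}. std_normal_density t)"
  define B where "B = (LBINT t:{z..}. (1 + t / c)\<^sup>2 * std_normal_density t)"
  have g: "g_low M snr a C' R x = Phi z + (1 / \<nu>) * (A - k * B)"
    unfolding g_low_def z_def[symmetric] L_def[symmetric] s_def[symmetric] \<nu>_def[symmetric]
      integ A_def B_def tail_lin by simp
  have AP: "Phi z + A \<ge> 1" unfolding A_def by (rule sum_ge1)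
  have F: "q\<^sup>2 * Phi z + B \<le> 1 + sqrt (2 / pi) / c + 1 / (2 * c\<^sup>2)"
    unfolding B_def by (rule F_bound[OF c qpos q1 z])
  have sL: "s = sqrt 2 * sqrt L" unfolding s_def by (simp add: real_sqrt_mult)
  have e1a: "sqrt (2 / pi) / c = inverse (sqrt L) / (sqrt pi * (1 + \<delta>))"
  proof -
    have gen: "\<And>p. p > 0 \<Longrightarrow> sqrt (2 / pi) / (sqrt 2 * sqrt L * p) = inverse (sqrt L) / (sqrt pi * p)"
      using L by (simp add: real_sqrt_divide field_simps)
    show ?thesis unfolding c_eq sL using gen[of "1 + \<delta>"] \<delta>0 by simp
  qed
  have e1b: "sqrt L / (sqrt pi * (1 + \<delta>)) / L = inverse (sqrt L) / (sqrt pi * (1 + \<delta>))"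
  proof -
    have "sqrt L / (sqrt pi * (1 + \<delta>)) / L = (sqrt L / L) / (sqrt pi * (1 + \<delta>))"
      by (simp add: mult.commute)
    then show ?thesis using sqrt_divide_self_eq[of L] L by simp
  qed
  have e1: "sqrt (2 / pi) / c = sqrt L / (sqrt pi * (1 + \<delta>)) / L" using e1a e1b by simp
  have e2: "1 / (2 * c\<^sup>2) = r0 M a / 2 / L"
  proof -
    have cc: "c\<^sup>2 = 2 * L * (1 + \<delta>)\<^sup>2" unfolding c_eq power_mult_distrib s2 by simp
    have pd: "(1 + \<delta>)^2 > 0" using \<delta>0 by simp
    show ?thesis unfolding cc r0_def \<delta>_def[symmetric] using L pd by (simp add: field_simps)
  qed
  define D where "D = (r - r1 M a) / L"
  have D: "D > 0" unfolding D_def using assms(5) L by simp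
  have wF: "w - (1 + sqrt (2 / pi) / c + 1 / (2 * c\<^sup>2)) = D"
  proof -
    have gen: "\<And>X. w - (1 + X / L + r0 M a / 2 / L) = (r - (r0 M a / 2 + X)) / L"
      unfolding w_def using L by (simp add: field_simps)
    show ?thesis unfolding e1 e2 D_def r1e by (rule gen)
  qed
  have "(1 - \<nu>) * D \<le> k * D" using k D by (intro mult_right_mono) auto
  also have "\<dots> \<le> k * (w - (q\<^sup>2 * Phi z + B))" unfolding wF[symmetric] using F k by (intro mult_left_mono) auto
  also have "\<dots> = k * w - (k * q\<^sup>2) * Phi z - k * B"
    by (simp add: algebra_simps)
  also have "\<dots> = u - (1 - \<nu>) * Phi z - k * B" unfolding kw q2 by (rule refl)
  also have "\<dots> \<le> \<nu> * Phi z + A - k * B - \<nu> * x"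
    using AP unfolding u_def by (simp add: algebra_simps)
  also have "\<dots> = \<nu> * (g_low M snr a C' R x - x)"
    unfolding g using \<nu> by (simp add: field_simps)
  finally have fin: "(1 - \<nu>) * D \<le> \<nu> * (g_low M snr a C' R x - x)" .
  have "(1 - \<nu>) / \<nu> * D = ((1 - \<nu>) * D) / \<nu>" by simp
  also have "\<dots> \<le> g_low M snr a C' R x - x"
    using fin \<nu> by (simp add: pos_divide_le_eq mult.commute)
  finally have fin2: "(1 - \<nu>) / \<nu> * D \<le> g_low M snr a C' R x - x" .
  have "(1 - \<nu>) / \<nu> = 1 / snr" using \<nu>s[symmetric] \<nu> by simp
  then show ?thesis using fin2 unfolding R_def D_def L_def by simp
qed

end
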